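(* Let $A$ be a commutative ring, $S\subseteq A$ a multiplicative system, and assume that the localisation $A[S^{-1}]$ satisfies $\mathrm{AFSR}_d$. Then for any row $(b_1,\ldots,b_d)$ with entries in $A[S^{-1}]$ and any $s\in S$, there exist $c_1,\ldots,c_{d-1}\in sA$ (i.e. images in $A[S^{-1}]$ of elements $sa$, $a\in A$) such that every maximal ideal of $A[S^{-1}]$ containing the ideal $\langle b_1+c_1b_d,\ldots,b_{d-1}+c_{d-1}b_d\rangle$ already contains the ideal $\langle b_1,\ldots,b_d\rangle$.
   Context: For a commutative ring $R$ with unit group $R^*$, $R$ satisfies $\mathrm{AFSR}_d$ if for any row $(b_1,\ldots,b_d)$ with entries in $R$ there exists $c_1\in R$ such that for any $\varepsilon_1\in R^*$ there exists $c_2\in R$ such that for any $\varepsilon_2\in R^*$, \ldots, there exists $c_{d-1}\in R$ such that for any $\varepsilon_{d-1}\in R^*$, every maximal ideal of $R$ containing $\langle b_1+\varepsilon_1c_1b_d,\ldots,b_{d-1}+\varepsilon_{d-1}c_{d-1}b_d\rangle$ already contains $\langle b_1,\ldots,b_d\rangle$. *)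

theory Defs
  imports "HOL-Algebra.Algebra"
begin

definition mult_system :: "('a, 'm) ring_scheme \<Rightarrow> 'a set \<Rightarrow> bool" where
  "mult_system A S \<longleftrightarrow> S \<subseteq> carrier A \<and> \<one>\<^bsub>A\<^esub> \<in> S \<and>
     (\<forall>s\<in>S. \<forall>t\<in>S. s \<otimes>\<^bsub>A\<^esub> t \<in> S)"

text \<open>Fractions a/s are pairs (a,s); (a,s) ~ (b,t) iff u(at) = u(bs) for some u in S.\<close>
definition loc_rel :: "('a, 'm) ring_scheme \<Rightarrow> 'a set \<Rightarrow> (('a \<times> 'a) \<times> ('a \<times> 'a)) set" where
  "loc_rel A S = {((a, s), (b, t)). a \<in> carrier A \<and> b \<in> carrier A \<and> s \<in> S \<and> t \<in> S \<and>
     (\<exists>u\<in>S. u \<otimes>\<^bsub>A\<^esub> (a \<otimes>\<^bsub>A\<^esub> t) = u \<otimes>\<^bsub>A\<^esub> (b \<otimes>\<^bsub>A\<^esub> s))}"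

definition loc_class :: "('a, 'm) ring_scheme \<Rightarrow> 'a set \<Rightarrow> 'a \<times> 'a \<Rightarrow> ('a \<times> 'a) set" where
  "loc_class A S p = loc_rel A S `` {p}"

text \<open>The localisation A[S^-1]; operations are defined on representatives
  (the union over representatives is the single class, by well-definedness).\<close>
definition loc_mult :: "('a, 'm) ring_scheme \<Rightarrow> 'a set \<Rightarrow> ('a \<times> 'a) set \<Rightarrow> ('a \<times> 'a) set \<Rightarrow> ('a \<times> 'a) set" where
  "loc_mult A S U V = Union {loc_class A S (fst p \<otimes>\<^bsub>A\<^esub> fst q, snd p \<otimes>\<^bsub>A\<^esub> snd q) | p q. p \<in> U \<and> q \<in> V}"

definition loc_add :: "('a, 'm) ring_scheme \<Rightarrow> 'a set \<Rightarrow> ('a \<times> 'a) set \<Rightarrow> ('a \<times> 'a) set \<Rightarrow> ('a \<times> 'a) set" where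
  "loc_add A S U V = Union {loc_class A S (fst p \<otimes>\<^bsub>A\<^esub> snd q \<oplus>\<^bsub>A\<^esub> fst q \<otimes>\<^bsub>A\<^esub> snd p,
                         snd p \<otimes>\<^bsub>A\<^esub> snd q) | p q. p \<in> U \<and> q \<in> V}"

definition localisation :: "('a, 'm) ring_scheme \<Rightarrow> 'a set \<Rightarrow> (('a \<times> 'a) set) ring" where
  "localisation A S =
    \<lparr> carrier = (carrier A \<times> S) // loc_rel A S,
      monoid.mult = loc_mult A S,
      one = loc_class A S (\<one>\<^bsub>A\<^esub>, \<one>\<^bsub>A\<^esub>),
      ring.zero = loc_class A S (\<zero>\<^bsub>A\<^esub>, \<one>\<^bsub>A\<^esub>),
      ring.add = loc_add A S \<rparr>"

definition loc_map :: "('a, 'm) ring_scheme \<Rightarrow> 'a set \<Rightarrow> 'a \<Rightarrow> ('a \<times> 'a) set" where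
  "loc_map A S a = loc_class A S (a, \<one>\<^bsub>A\<^esub>)"

text \<open>Rows (b_1,...,b_d) are functions b with b i = b_(i+1) for i < d; so b_d = b (d-1).
  afsr_game R b d n t: n choices (c, then epsilon) remain; t i stores
  b_(i+1) + eps_(i+1) c_(i+1) b_d for the indices already chosen.
  With n remaining choices, the next index to be chosen is (d - 1) - n.\<close>
fun afsr_game :: "('b, 'm) ring_scheme \<Rightarrow> (nat \<Rightarrow> 'b) \<Rightarrow> nat \<Rightarrow> nat \<Rightarrow> (nat \<Rightarrow> 'b) \<Rightarrow> bool" where
  "afsr_game R b d 0 t =
     (\<forall>M. maximalideal M R \<longrightarrow> Idl\<^bsub>R\<^esub> (t ` {..<d - 1}) \<subseteq> M \<longrightarrow> Idl\<^bsub>R\<^esub> (b ` {..<d}) \<subseteq> M)"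
| "afsr_game R b d (Suc n) t =
     (\<exists>c\<in>carrier R. \<forall>\<epsilon>\<in>Units R.
        afsr_game R b d n (t((d - 1) - Suc n := b ((d - 1) - Suc n) \<oplus>\<^bsub>R\<^esub> \<epsilon> \<otimes>\<^bsub>R\<^esub> c \<otimes>\<^bsub>R\<^esub> b (d - 1))))"

definition AFSR :: "('b, 'm) ring_scheme \<Rightarrow> nat \<Rightarrow> bool" where
  "AFSR R d \<longleftrightarrow> (\<forall>b. (\<forall>i<d. b i \<in> carrier R) \<longrightarrow> afsr_game R b d (d - 1) (\<lambda>_. \<zero>\<^bsub>R\<^esub>))"

end

theory Submission
  imports Defs
begin

context cring
begin

lemma loc_rel_equiv:
  assumes ms: "mult_system R S"
  shows "equiv (carrier R \<times> S) (loc_rel R S)"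
proof -
  have SC: "S \<subseteq> carrier R" and one: "\<one> \<in> S"
    using ms unfolding mult_system_def by auto
  show ?thesis
  proof (rule equivI)
    show "loc_rel R S \<subseteq> (carrier R \<times> S) \<times> (carrier R \<times> S)"
      unfolding loc_rel_def by auto
    show "refl_on (carrier R \<times> S) (loc_rel R S)"
      unfolding refl_on_def loc_rel_def using one by auto
    show "sym (loc_rel R S)"
    proof (rule symI)
      fix x y assume "(x, y) \<in> loc_rel R S"
      then show "(y, x) \<in> loc_rel R S"
        by (cases x, cases y) (auto simp: loc_rel_def intro: sym)
    qed
    show "trans (loc_rel R S)"
    proof (rule transI)
      fix x y z assume xy: "(x, y) \<in> loc_rel R S" and yz: "(y, z) \<in> loc_rel R S"
      obtain a s where x: "x = (a, s)" by (cases x)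
      obtain b t where y: "y = (b, t)" by (cases y)
      obtain c r where z: "z = (c, r)" by (cases z)
      from xy obtain u where u: "u \<in> S" "u \<otimes> (a \<otimes> t) = u \<otimes> (b \<otimes> s)"
        and ab: "a \<in> carrier R" "b \<in> carrier R" "s \<in> S" "t \<in> S"
        unfolding x y loc_rel_def by auto
      from yz obtain v where v: "v \<in> S" "v \<otimes> (b \<otimes> r) = v \<otimes> (c \<otimes> t)"
        and c: "c \<in> carrier R" "r \<in> S"
        unfolding z y loc_rel_def by auto
      have C: "a \<in> carrier R" "b \<in> carrier R" "c \<in> carrier R" "s \<in> carrier R" "t \<in> carrier R"
        "r \<in> carrier R" "u \<in> carrier R" "v \<in> carrier R"
        using ab c u v SC by auto
      have w: "u \<otimes> v \<otimes> t \<in> S"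
        using ms u v ab unfolding mult_system_def by auto
      have "(u \<otimes> v \<otimes> t) \<otimes> (a \<otimes> r) = (v \<otimes> r) \<otimes> (u \<otimes> (a \<otimes> t))"
        using C by (simp add: m_ac)
      also have "\<dots> = (v \<otimes> r) \<otimes> (u \<otimes> (b \<otimes> s))" using u by simp
      also have "\<dots> = (u \<otimes> s) \<otimes> (v \<otimes> (b \<otimes> r))" using C by (simp add: m_ac)
      also have "\<dots> = (u \<otimes> s) \<otimes> (v \<otimes> (c \<otimes> t))" using v by simp
      also have "\<dots> = (u \<otimes> v \<otimes> t) \<otimes> (c \<otimes> s)" using C by (simp add: m_ac)
      finally show "(x, z) \<in> loc_rel R S"
        unfolding x z loc_rel_def using ab c w by auto
    qed
  qed
qed

lemma loc_rel_mult:
  assumes ms: "mult_system R S"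
    and "((a, s), (a', s')) \<in> loc_rel R S" and "((b, t), (b', t')) \<in> loc_rel R S"
  shows "((a \<otimes> b, s \<otimes> t), (a' \<otimes> b', s' \<otimes> t')) \<in> loc_rel R S"
proof -
  have SC: "S \<subseteq> carrier R" and mc: "\<And>x y. x \<in> S \<Longrightarrow> y \<in> S \<Longrightarrow> x \<otimes> y \<in> S"
    using ms unfolding mult_system_def by auto
  from assms(2) obtain u where u: "u \<in> S" "u \<otimes> (a \<otimes> s') = u \<otimes> (a' \<otimes> s)"
    and A: "a \<in> carrier R" "a' \<in> carrier R" "s \<in> S" "s' \<in> S"
    unfolding loc_rel_def by auto
  from assms(3) obtain v where v: "v \<in> S" "v \<otimes> (b \<otimes> t') = v \<otimes> (b' \<otimes> t)"
    and B: "b \<in> carrier R" "b' \<in> carrier R" "t \<in> S" "t' \<in> S"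
    unfolding loc_rel_def by auto
  have C: "a \<in> carrier R" "a' \<in> carrier R" "s \<in> carrier R" "s' \<in> carrier R"
     "b \<in> carrier R" "b' \<in> carrier R" "t \<in> carrier R" "t' \<in> carrier R"
     "u \<in> carrier R" "v \<in> carrier R"
    using A B u v SC by auto
  have "(u \<otimes> v) \<otimes> ((a \<otimes> b) \<otimes> (s' \<otimes> t')) = (u \<otimes> (a \<otimes> s')) \<otimes> (v \<otimes> (b \<otimes> t'))"
    using C by (simp add: m_ac)
  also have "\<dots> = (u \<otimes> (a' \<otimes> s)) \<otimes> (v \<otimes> (b' \<otimes> t))" using u v by simp
  also have "\<dots> = (u \<otimes> v) \<otimes> ((a' \<otimes> b') \<otimes> (s \<otimes> t))" using C by (simp add: m_ac)
  finally show ?thesis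
    unfolding loc_rel_def using A B u v mc by auto
qed

lemma loc_mult_class:
  assumes ms: "mult_system R S"
    and p: "p \<in> carrier R \<times> S" and q: "q \<in> carrier R \<times> S"
  shows "loc_mult R S (loc_class R S p) (loc_class R S q) =
         loc_class R S (fst p \<otimes> fst q, snd p \<otimes> snd q)"
proof -
  have E: "equiv (carrier R \<times> S) (loc_rel R S)" using loc_rel_equiv[OF ms] .
  have eq: "loc_class R S (fst p' \<otimes> fst q', snd p' \<otimes> snd q') =
         loc_class R S (fst p \<otimes> fst q, snd p \<otimes> snd q)"
    if "p' \<in> loc_class R S p" "q' \<in> loc_class R S q" for p' q'
  proof -
    have "(p, p') \<in> loc_rel R S" "(q, q') \<in> loc_rel R S"
      using that unfolding loc_class_def by auto
    hence "((fst p \<otimes> fst q, snd p \<otimes> snd q), (fst p' \<otimes> fst q', snd p' \<otimes> snd q')) \<in> loc_rel R S"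
      using loc_rel_mult[OF ms, of "fst p" "snd p" "fst p'" "snd p'" "fst q" "snd q" "fst q'" "snd q'"]
      by simp
    thus ?thesis unfolding loc_class_def using E equiv_class_eq_iff by metis
  qed
  have pp: "p \<in> loc_class R S p" "q \<in> loc_class R S q"
    unfolding loc_class_def using equiv_class_self[OF E p] equiv_class_self[OF E q] by auto
  show ?thesis
    unfolding loc_mult_def
  proof (rule equalityI)
    show "\<Union> {loc_class R S (fst p' \<otimes> fst q', snd p' \<otimes> snd q') |p' q'.
        p' \<in> loc_class R S p \<and> q' \<in> loc_class R S q} \<subseteq> loc_class R S (fst p \<otimes> fst q, snd p \<otimes> snd q)"
      using eq by blast
    show "loc_class R S (fst p \<otimes> fst q, snd p \<otimes> snd q) \<subseteq> \<Union> {loc_class R S (fst p' \<otimes> fst q', snd p' \<otimes> snd q') |p' q'.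
        p' \<in> loc_class R S p \<and> q' \<in> loc_class R S q}"
      using pp by blast
  qed
qed

lemma key:
  assumes ms: "mult_system R S" and s: "s \<in> S"
    and c: "c \<in> carrier (localisation R S)"
  shows "\<exists>\<epsilon>\<in>Units (localisation R S). \<exists>a\<in>carrier R.
           \<epsilon> \<otimes>\<^bsub>localisation R S\<^esub> c = loc_map R S (s \<otimes> a)"
proof -
  have SC: "S \<subseteq> carrier R" and one: "\<one> \<in> S" and mc: "\<And>x y. x \<in> S \<Longrightarrow> y \<in> S \<Longrightarrow> x \<otimes> y \<in> S"
    using ms unfolding mult_system_def by auto
  have E: "equiv (carrier R \<times> S) (loc_rel R S)" using loc_rel_equiv[OF ms] .
  from c obtain a1 t1 where a1: "a1 \<in> carrier R" and t1: "t1 \<in> S"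
    and cc: "c = loc_class R S (a1, t1)"
    unfolding localisation_def loc_class_def by (auto elim!: quotientE)
  have sC: "s \<in> carrier R" and t1C: "t1 \<in> carrier R" using s t1 SC by auto
  define e where "e = loc_class R S (s \<otimes> t1, \<one>)"
  define x where "x = loc_class R S (\<one>, s \<otimes> t1)"
  have st: "s \<otimes> t1 \<in> S" using mc s t1 by auto
  have eC: "e \<in> carrier (localisation R S)"
    unfolding e_def localisation_def loc_class_def using sC t1C one by (auto intro!: quotientI)
  have xC: "x \<in> carrier (localisation R S)"
    unfolding x_def localisation_def loc_class_def using st by (auto intro!: quotientI)
  have cls: "loc_class R S p = loc_class R S q" if "(p, q) \<in> loc_rel R S" for p q
    using that E equiv_class_eq_iff unfolding loc_class_def by metis
  have "x \<otimes>\<^bsub>localisation R S\<^esub> e = loc_class R S (\<one> \<otimes> (s \<otimes> t1), (s \<otimes> t1) \<otimes> \<one>)"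
    unfolding x_def e_def localisation_def using loc_mult_class[OF ms] st sC t1C one by simp
  also have "\<dots> = loc_class R S (\<one>, \<one>)"
    by (rule cls) (unfold loc_rel_def, use st sC t1C one SC in \<open>auto intro!: bexI[of _ \<one>]\<close>)
  finally have xe: "x \<otimes>\<^bsub>localisation R S\<^esub> e = \<one>\<^bsub>localisation R S\<^esub>"
    unfolding localisation_def by simp
  have "e \<otimes>\<^bsub>localisation R S\<^esub> x = loc_class R S ((s \<otimes> t1) \<otimes> \<one>, \<one> \<otimes> (s \<otimes> t1))"
    unfolding x_def e_def localisation_def using loc_mult_class[OF ms] st sC t1C one by simp
  also have "\<dots> = loc_class R S (\<one>, \<one>)"
    by (rule cls) (unfold loc_rel_def, use st sC t1C one SC in \<open>auto intro!: bexI[of _ \<one>]\<close>)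
  finally have ex: "e \<otimes>\<^bsub>localisation R S\<^esub> x = \<one>\<^bsub>localisation R S\<^esub>"
    unfolding localisation_def by simp
  have eU: "e \<in> Units (localisation R S)"
    unfolding Units_def using eC xC xe ex by blast
  have "e \<otimes>\<^bsub>localisation R S\<^esub> c = loc_class R S ((s \<otimes> t1) \<otimes> a1, \<one> \<otimes> t1)"
    unfolding cc e_def localisation_def using loc_mult_class[OF ms] st sC t1C one a1 t1 by simp
  also have "\<dots> = loc_class R S (s \<otimes> a1, \<one>)"
    by (rule cls) (unfold loc_rel_def, use st sC t1C one SC a1 t1 in \<open>auto intro!: bexI[of _ \<one>] simp: m_ac\<close>)
  finally have "e \<otimes>\<^bsub>localisation R S\<^esub> c = loc_map R S (s \<otimes> a1)"
    unfolding loc_map_def .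
  thus ?thesis using eU a1 by blast
qed

end

lemma game:
  assumes H: "\<And>c. c \<in> carrier R \<Longrightarrow> \<exists>\<epsilon>\<in>Units R. Q (\<epsilon> \<otimes>\<^bsub>R\<^esub> c)"
    and Q0: "Q q0"
  shows "afsr_game R b d n t \<Longrightarrow> n \<le> d - 1 \<Longrightarrow> \<exists>c'. (\<forall>i<d - 1. Q (c' i)) \<and>
    (\<forall>M. maximalideal M R \<longrightarrow>
       Idl\<^bsub>R\<^esub> ((\<lambda>i. if i < (d - 1) - n then t i else b i \<oplus>\<^bsub>R\<^esub> c' i \<otimes>\<^bsub>R\<^esub> b (d - 1)) ` {..<d - 1}) \<subseteq> M \<longrightarrow>
       Idl\<^bsub>R\<^esub> (b ` {..<d}) \<subseteq> M)"
proof (induction n arbitrary: t)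
  case 0
  have "(\<lambda>i. if i < (d - 1) - 0 then t i else b i \<oplus>\<^bsub>R\<^esub> (\<lambda>_. q0) i \<otimes>\<^bsub>R\<^esub> b (d - 1)) ` {..<d - 1}
        = t ` {..<d - 1}" by (intro image_cong) auto
  then show ?case using 0 Q0 by (intro exI[of _ "\<lambda>_. q0"]) auto
next
  case (Suc n)
  define k where "k = (d - 1) - Suc n"
  from Suc.prems(1) obtain c where c: "c \<in> carrier R" and
    G: "\<forall>\<epsilon>\<in>Units R. afsr_game R b d n (t(k := b k \<oplus>\<^bsub>R\<^esub> \<epsilon> \<otimes>\<^bsub>R\<^esub> c \<otimes>\<^bsub>R\<^esub> b (d - 1)))"
    unfolding k_def by auto
  obtain \<epsilon> where e: "\<epsilon> \<in> Units R" and Qe: "Q (\<epsilon> \<otimes>\<^bsub>R\<^esub> c)" using H[OF c] by blast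
  obtain c' where Qc: "\<forall>i<d - 1. Q (c' i)" and
    M: "\<forall>M. maximalideal M R \<longrightarrow>
       Idl\<^bsub>R\<^esub> ((\<lambda>i. if i < (d - 1) - n then (t(k := b k \<oplus>\<^bsub>R\<^esub> \<epsilon> \<otimes>\<^bsub>R\<^esub> c \<otimes>\<^bsub>R\<^esub> b (d - 1))) i
         else b i \<oplus>\<^bsub>R\<^esub> c' i \<otimes>\<^bsub>R\<^esub> b (d - 1)) ` {..<d - 1}) \<subseteq> M \<longrightarrow>
       Idl\<^bsub>R\<^esub> (b ` {..<d}) \<subseteq> M"
    using Suc.IH[OF G[rule_format, OF e]] Suc.prems(2) by auto
  have kk: "(d - 1) - n = Suc k" unfolding k_def using Suc.prems(2) by auto
  have img: "(\<lambda>i. if i < (d - 1) - n then (t(k := b k \<oplus>\<^bsub>R\<^esub> \<epsilon> \<otimes>\<^bsub>R\<^esub> c \<otimes>\<^bsub>R\<^esub> b (d - 1))) i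
         else b i \<oplus>\<^bsub>R\<^esub> c' i \<otimes>\<^bsub>R\<^esub> b (d - 1)) ` {..<d - 1} =
     (\<lambda>i. if i < (d - 1) - Suc n then t i
         else b i \<oplus>\<^bsub>R\<^esub> (c'(k := \<epsilon> \<otimes>\<^bsub>R\<^esub> c)) i \<otimes>\<^bsub>R\<^esub> b (d - 1)) ` {..<d - 1}"
    unfolding kk k_def[symmetric] by (intro image_cong) (auto simp: less_Suc_eq)
  show ?case
    using M Qc Qe unfolding img
    by (intro exI[of _ "c'(k := \<epsilon> \<otimes>\<^bsub>R\<^esub> c)"]) auto
qed

theorem lemma3:
  fixes A :: "('a, 'm) ring_scheme" and S :: "'a set" and d :: nat
    and b :: "nat \<Rightarrow> ('a \<times> 'a) set" and s :: 'a
  assumes "cring A"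
    and "mult_system A S"
    and "d \<ge> 1"
    and "AFSR (localisation A S) d"
    and "\<forall>i<d. b i \<in> carrier (localisation A S)"
    and "s \<in> S"
  shows "\<exists>c. (\<forall>i<d - 1. \<exists>a\<in>carrier A. c i = loc_map A S (s \<otimes>\<^bsub>A\<^esub> a)) \<and>
    (\<forall>M. maximalideal M (localisation A S) \<longrightarrow>
       Idl\<^bsub>localisation A S\<^esub> ((\<lambda>i. b i \<oplus>\<^bsub>localisation A S\<^esub> c i \<otimes>\<^bsub>localisation A S\<^esub> b (d - 1)) ` {..<d - 1}) \<subseteq> M \<longrightarrow>
       Idl\<^bsub>localisation A S\<^esub> (b ` {..<d}) \<subseteq> M)"
proof -
  let ?Q = "\<lambda>x. \<exists>a\<in>carrier A. x = loc_map A S (s \<otimes>\<^bsub>A\<^esub> a)"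
  have H: "\<And>c. c \<in> carrier (localisation A S) \<Longrightarrow> \<exists>\<epsilon>\<in>Units (localisation A S). ?Q (\<epsilon> \<otimes>\<^bsub>localisation A S\<^esub> c)"
    using cring.key[OF assms(1) assms(2) assms(6)] by blast
  have Q0: "?Q (loc_map A S (s \<otimes>\<^bsub>A\<^esub> \<one>\<^bsub>A\<^esub>))"
    using assms(1) by (auto intro: cring.axioms ring.ring_simprules)
  have G: "afsr_game (localisation A S) b d (d - 1) (\<lambda>_. \<zero>\<^bsub>localisation A S\<^esub>)"
    using assms(4,5) unfolding AFSR_def by blast
  from game[OF H Q0 G] show ?thesis by simp
qed

end
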